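(* Let $A\in\mathbb{R}^{p\times n}$ with $A\mathbf{1}=\mathbf{0}$, let $A=U\Sigma V$ be its compact SVD with singular values in descending order ($V$ with orthonormal rows), and let $K$ be an integer with $2\le K\le\operatorname{rank}(A)+1$; let $V_{1:K-1}$ be the first $K-1$ rows of $V$ (the solution of PCA $\min_{D,X}\|A-DX\|_F^2$ s.t. $XX^T=I$, $X\in\mathbb{R}^{(K-1)\times n}$). Put $\beta=-\min_{i,j}(A^TA)_{ij}$, $\tilde A=\begin{bmatrix}\sqrt\beta\,\mathbf{1}^T\\ A\end{bmatrix}$, $W=\tilde A^T\tilde A$, $L=\operatorname{diag}(W\mathbf{1})-W$. Let $H\in\mathbb{R}^{K\times n}$ be a normalized-indicator solution of K-means $\min_{D,X}\|A-DX\|_F^2$ s.t. $X\in\mathcal{H}$ (equivalently of ratio cut $\min_X\operatorname{tr}\{XLX^T\}$ s.t. $X\in\mathcal{H}$). If $W$ satisfies the ideal graph condition with respect to $K$ clusters, then there exists $R\in\mathbb{R}^{K\times K}$ with $R^TR=I$ such that $$\begin{bmatrix}\tfrac1{\sqrt n}\mathbf{1}^T\\ V_{1:K-1}\end{bmatrix}=RH.$$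
   Context: $\mathbf{1}$ is the all-ones vector, $\operatorname{diag}(v)$ the diagonal matrix with diagonal $v$. $\mathcal{F}$ is the set of matrices $F\in\{0,1\}^{K\times n}$ each of whose columns has exactly one entry $1$ (clusters nonempty), and $\mathcal{H}=\{(FF^T)^{-1/2}F:F\in\mathcal{F}\}$. Ideal graph condition for $W$ with respect to $K$: the graph on $\{1,\dots,n\}$ with an edge between $i,j$ whenever $W_{ij}>0$ has exactly $K$ connected components. *)

theory Defs
  imports "Jordan_Normal_Form.DL_Rank"
begin

definition fro2 :: "real mat \<Rightarrow> real" where
  "fro2 M = (\<Sum>i<dim_row M. \<Sum>j<dim_col M. (M $$ (i,j))^2)"

definition indicator_mats :: "nat \<Rightarrow> nat \<Rightarrow> real mat set" where
  "indicator_mats K n = {F. F \<in> carrier_mat K n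
     \<and> (\<forall>k<K. \<forall>i<n. F $$ (k,i) = 0 \<or> F $$ (k,i) = 1)
     \<and> (\<forall>i<n. \<exists>!k. k < K \<and> F $$ (k,i) = 1)
     \<and> (\<forall>k<K. \<exists>i<n. F $$ (k,i) = 1)}"

(* \<H> = {(F F^T)^{-1/2} F}; F F^T = diag(cluster sizes), so entry (k,i) is F_ki / sqrt(n_k) *)
definition norm_indicator_mats :: "nat \<Rightarrow> nat \<Rightarrow> real mat set" where
  "norm_indicator_mats K n =
     (\<lambda>F. mat K n (\<lambda>(k,i). F $$ (k,i) / sqrt ((F * transpose_mat F) $$ (k,k)))) ` indicator_mats K n"

definition compact_svd :: "nat \<Rightarrow> nat \<Rightarrow> real mat \<Rightarrow> real mat \<Rightarrow> real mat \<Rightarrow> real mat \<Rightarrow> bool" where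
  "compact_svd p n A U S V \<longleftrightarrow> (\<exists>r.
     U \<in> carrier_mat p r \<and> S \<in> carrier_mat r r \<and> V \<in> carrier_mat r n
     \<and> transpose_mat U * U = 1\<^sub>m r
     \<and> V * transpose_mat V = 1\<^sub>m r
     \<and> (\<forall>i<r. \<forall>j<r. i \<noteq> j \<longrightarrow> S $$ (i,j) = 0)
     \<and> (\<forall>i<r. S $$ (i,i) > 0)
     \<and> (\<forall>i<r. \<forall>j<r. i \<le> j \<longrightarrow> S $$ (i,i) \<ge> S $$ (j,j))
     \<and> A = U * S * V)"

definition beta_of :: "real mat \<Rightarrow> real" where
  "beta_of A = - Min {(transpose_mat A * A) $$ (i,j) | i j. i < dim_col A \<and> j < dim_col A}"

definition A_tilde :: "real mat \<Rightarrow> real mat" where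
  "A_tilde A = mat (dim_row A + 1) (dim_col A)
     (\<lambda>(i,j). if i = 0 then sqrt (beta_of A) else A $$ (i - 1, j))"

definition W_of :: "real mat \<Rightarrow> real mat" where
  "W_of A = transpose_mat (A_tilde A) * A_tilde A"

definition ideal_graph :: "real mat \<Rightarrow> nat \<Rightarrow> bool" where
  "ideal_graph W K \<longleftrightarrow>
     (let n = dim_row W;
          E = {(i,j). i < n \<and> j < n \<and> W $$ (i,j) > 0}
      in card ({0..<n} // ((E \<union> E\<inverse>)\<^sup>*)) = K)"

definition stacked_V :: "nat \<Rightarrow> nat \<Rightarrow> real mat \<Rightarrow> real mat" where
  "stacked_V K n V = mat K n (\<lambda>(i,j). if i = 0 then 1 / sqrt (real n) else V $$ (i - 1, j))"

end

theory Submission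
  imports Defs
begin


lemma orth_sum:
  fixes f :: "nat \<Rightarrow> nat \<Rightarrow> real"
  assumes orth: "\<And>a b. a<r \<Longrightarrow> b<r \<Longrightarrow> (\<Sum>i<n. f a i * f b i) = (if a = b then 1 else 0)"
  shows "(\<Sum>i<n. (\<Sum>a<r. c a * f a i)^2) = (\<Sum>a<r. (c a)^2)"
proof -
  have "(\<Sum>i<n. (\<Sum>a<r. c a * f a i)^2) = (\<Sum>i<n. \<Sum>a<r. \<Sum>b<r. c a * c b * (f a i * f b i))"
    by (simp add: power2_eq_square sum_product algebra_simps)
  also have "\<dots> = (\<Sum>a<r. \<Sum>b<r. \<Sum>i<n. c a * c b * (f a i * f b i))"
    by (simp add: sum.swap[of _ "{..<n}"] sum.swap[of _ "{..<n}" "{..<r}"])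
  also have "\<dots> = (\<Sum>a<r. \<Sum>b<r. c a * c b * (if a = b then 1 else 0))"
    by (simp add: sum_distrib_left[symmetric] orth)
  also have "\<dots> = (\<Sum>a<r. (c a)^2)"
    by (simp add: power2_eq_square if_distrib sum.delta cong: if_cong)
  finally show ?thesis .
qed

lemma orth_dot:
  fixes f :: "nat \<Rightarrow> nat \<Rightarrow> real"
  assumes orth: "\<And>a b. a<r \<Longrightarrow> b<r \<Longrightarrow> (\<Sum>i<n. f a i * f b i) = (if a = b then 1 else 0)"
    and b: "b < r"
  shows "(\<Sum>i<n. f b i * (\<Sum>a<r. c a * f a i)) = c b"
proof -
  have "(\<Sum>i<n. f b i * (\<Sum>a<r. c a * f a i)) = (\<Sum>a<r. c a * (\<Sum>i<n. f a i * f b i))"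
    by (simp add: sum_distrib_left sum.swap[of _ "{..<n}"] algebra_simps)
  also have "\<dots> = (\<Sum>a<r. c a * (if a = b then 1 else 0))"
    by (rule sum.cong) (simp_all add: orth b)
  also have "\<dots> = c b" using b by (simp add: if_distrib sum.delta cong: if_cong)
  finally show ?thesis .
qed

lemma kmeans_row:
  fixes h :: "nat \<Rightarrow> nat \<Rightarrow> real"
  assumes orth: "\<And>a b. a<K \<Longrightarrow> b<K \<Longrightarrow> (\<Sum>i<n. h a i * h b i) = (if a = b then 1 else 0)"
  shows "(\<Sum>i<n. (x i - (\<Sum>k<K. d k * h k i))^2) =
    (\<Sum>i<n. (x i)^2) - (\<Sum>k<K. (\<Sum>i<n. x i * h k i)^2) + (\<Sum>k<K. (d k - (\<Sum>i<n. x i * h k i))^2)"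
proof -
  have 1: "(\<Sum>i<n. (\<Sum>k<K. d k * h k i)^2) = (\<Sum>k<K. (d k)^2)" by (rule orth_sum[OF orth])
  have 2: "(\<Sum>i<n. x i * (\<Sum>k<K. d k * h k i)) = (\<Sum>k<K. d k * (\<Sum>i<n. x i * h k i))"
    by (simp add: sum_distrib_left sum.swap[of _ "{..<n}"] algebra_simps)
  have "(\<Sum>i<n. (x i - (\<Sum>k<K. d k * h k i))^2) = (\<Sum>i<n. (x i)^2) - 2 * (\<Sum>i<n. x i * (\<Sum>k<K. d k * h k i)) + (\<Sum>i<n. (\<Sum>k<K. d k * h k i)^2)"
    by (simp add: power2_diff sum_subtractf sum.distrib sum_distrib_left algebra_simps)
  also have "\<dots> = (\<Sum>i<n. (x i)^2) - (\<Sum>k<K. (\<Sum>i<n. x i * h k i)^2) + (\<Sum>k<K. (d k - (\<Sum>i<n. x i * h k i))^2)"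
    unfolding 1 2 by (simp add: power2_diff sum_subtractf sum.distrib sum_distrib_left algebra_simps)
  finally show ?thesis .
qed

lemma bessel:
  fixes f :: "nat \<Rightarrow> nat \<Rightarrow> real"
  assumes orth: "\<And>a b. a<r \<Longrightarrow> b<r \<Longrightarrow> (\<Sum>i<n. f a i * f b i) = (if a = b then 1 else 0)"
  shows "(\<Sum>a<r. (\<Sum>i<n. y i * f a i)^2) \<le> (\<Sum>i<n. (y i)^2)"
proof -
  have "0 \<le> (\<Sum>i<n. (y i - (\<Sum>k<r. (\<Sum>i<n. y i * f k i) * f k i))^2)" by (simp add: sum_nonneg)
  also have "\<dots> = (\<Sum>i<n. (y i)^2) - (\<Sum>a<r. (\<Sum>i<n. y i * f a i)^2)"
    by (simp add: kmeans_row[OF orth])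
  finally show ?thesis by simp
qed

lemma lap:
  fixes w :: "nat \<Rightarrow> nat \<Rightarrow> real"
  assumes sym: "\<And>i j. i<n \<Longrightarrow> j<n \<Longrightarrow> w i j = w j i"
    and rs: "\<And>i. i<n \<Longrightarrow> (\<Sum>j<n. w i j) = c"
  shows "(\<Sum>i<n. \<Sum>j<n. w i j * x i * x j) = c * (\<Sum>i<n. (x i)^2) - (\<Sum>i<n. \<Sum>j<n. w i j * (x i - x j)^2)/2"
proof -
  have a: "(\<Sum>i<n. \<Sum>j<n. w i j * (x i)^2) = c * (\<Sum>i<n. (x i)^2)"
    by (simp add: sum_distrib_left sum_distrib_right[symmetric] rs mult.commute)
  have b: "(\<Sum>i<n. \<Sum>j<n. w i j * (x j)^2) = c * (\<Sum>i<n. (x i)^2)"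
  proof -
    have "(\<Sum>i<n. \<Sum>j<n. w i j * (x j)^2) = (\<Sum>j<n. \<Sum>i<n. w j i * (x j)^2)"
      by (subst sum.swap) (simp add: sym)
    thus ?thesis using a by simp
  qed
  have "(\<Sum>i<n. \<Sum>j<n. w i j * (x i - x j)^2) = (\<Sum>i<n. \<Sum>j<n. w i j * (x i)^2) + (\<Sum>i<n. \<Sum>j<n. w i j * (x j)^2) - 2 * (\<Sum>i<n. \<Sum>j<n. w i j * x i * x j)"
    by (simp add: power2_diff sum_subtractf sum.distrib sum_distrib_left algebra_simps)
  thus ?thesis using a b by linarith
qed




lemma lap_le:
  fixes w :: "nat \<Rightarrow> nat \<Rightarrow> real"
  assumes sym: "\<And>i j. i<n \<Longrightarrow> j<n \<Longrightarrow> w i j = w j i"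
    and rs: "\<And>i. i<n \<Longrightarrow> (\<Sum>j<n. w i j) = c"
    and nn: "\<And>i j. i<n \<Longrightarrow> j<n \<Longrightarrow> 0 \<le> w i j"
  shows "(\<Sum>i<n. \<Sum>j<n. w i j * x i * x j) \<le> c * (\<Sum>i<n. (x i)^2)"
proof -
  have "0 \<le> (\<Sum>i<n. \<Sum>j<n. w i j * (x i - x j)^2)" by (intro sum_nonneg) (simp add: nn)
  thus ?thesis using lap[OF sym rs, of x] by simp
qed

lemma lap_eq:
  fixes w :: "nat \<Rightarrow> nat \<Rightarrow> real"
  assumes sym: "\<And>i j. i<n \<Longrightarrow> j<n \<Longrightarrow> w i j = w j i"
    and rs: "\<And>i. i<n \<Longrightarrow> (\<Sum>j<n. w i j) = c"
    and nn: "\<And>i j. i<n \<Longrightarrow> j<n \<Longrightarrow> 0 \<le> w i j"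
    and eq: "(\<Sum>i<n. \<Sum>j<n. w i j * x i * x j) = c * (\<Sum>i<n. (x i)^2)"
    and ij: "i < n" "j < n" "w i j > 0"
  shows "x i = x j"
proof -
  have z: "(\<Sum>i<n. \<Sum>j<n. w i j * (x i - x j)^2) = 0" using lap[OF sym rs, of x] eq by simp
  have "(\<Sum>j<n. w i j * (x i - x j)^2) = 0"
    using z ij(1) by (subst (asm) sum_nonneg_eq_0_iff) (auto intro!: sum_nonneg simp: nn)
  hence "\<forall>j\<in>{..<n}. w i j * (x i - x j)^2 = 0"
    using ij by (subst (asm) sum_nonneg_eq_0_iff) (auto simp: nn)
  hence "w i j * (x i - x j)^2 = 0" using ij(2) by blast
  thus ?thesis using ij(3) by simp
qed

lemma lap_const:
  fixes w :: "nat \<Rightarrow> nat \<Rightarrow> real"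
  assumes sym: "\<And>i j. i<n \<Longrightarrow> j<n \<Longrightarrow> w i j = w j i"
    and rs: "\<And>i. i<n \<Longrightarrow> (\<Sum>j<n. w i j) = c"
    and nn: "\<And>i j. i<n \<Longrightarrow> j<n \<Longrightarrow> 0 \<le> w i j"
    and cst: "\<And>i j. i<n \<Longrightarrow> j<n \<Longrightarrow> w i j > 0 \<Longrightarrow> x i = x j"
  shows "(\<Sum>i<n. \<Sum>j<n. w i j * x i * x j) = c * (\<Sum>i<n. (x i)^2)"
proof -
  have "(\<Sum>i<n. \<Sum>j<n. w i j * (x i - x j)^2) = 0"
  proof (intro sum.neutral ballI)
    fix i j assume "i \<in> {..<n}" "j \<in> {..<n}"
    thus "w i j * (x i - x j)^2 = 0" using nn[of i j] cst[of i j] by force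
  qed
  thus ?thesis using lap[OF sym rs, of x] by simp
qed

lemma lin_sys_gen:
  fixes a :: "nat \<Rightarrow> nat \<Rightarrow> real"
  assumes "finite I" "m < card I"
  shows "\<exists>d. (\<exists>k\<in>I. d k \<noteq> 0) \<and> (\<forall>e<m. (\<Sum>k\<in>I. a e k * d k) = 0)"
  using assms
proof (induction m arbitrary: I a)
  case 0
  then obtain k where "k \<in> I" by (metis card.empty card_gt_0_iff empty_iff not_less0 ex_in_conv)
  thus ?case by (intro exI[of _ "\<lambda>_. 1"]) auto
next
  case (Suc m)
  show ?case
  proof (cases "\<forall>k\<in>I. a m k = 0")
    case True
    from Suc.IH[of I a] Suc.prems obtain d where d: "\<exists>k\<in>I. d k \<noteq> 0" "\<forall>e<m. (\<Sum>k\<in>I. a e k * d k) = 0" by auto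
    have "\<forall>e<Suc m. (\<Sum>k\<in>I. a e k * d k) = 0"
      using d(2) True by (auto simp: less_Suc_eq)
    thus ?thesis using d(1) by blast
  next
    case False
    then obtain k0 where k0: "k0 \<in> I" "a m k0 \<noteq> 0" by blast
    define I' where "I' = I - {k0}"
    define a' where "a' = (\<lambda>e k. a e k - a e k0 * a m k / a m k0)"
    have fI': "finite I'" using Suc.prems by (simp add: I'_def)
    have cI': "m < card I'" using Suc.prems k0 by (simp add: I'_def)
    from Suc.IH[OF fI' cI', of a'] obtain d' where
      d': "\<exists>k\<in>I'. d' k \<noteq> 0" "\<forall>e<m. (\<Sum>k\<in>I'. a' e k * d' k) = 0" by auto
    define d where "d = d'(k0 := - (\<Sum>k\<in>I'. a m k * d' k) / a m k0)"
    have split: "(\<Sum>k\<in>I. a e k * d k) = a e k0 * d k0 + (\<Sum>k\<in>I'. a e k * d' k)" for e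
    proof -
      have "(\<Sum>k\<in>I. a e k * d k) = a e k0 * d k0 + (\<Sum>k\<in>I'. a e k * d k)"
        using Suc.prems(1) k0(1) unfolding I'_def by (simp add: sum.remove)
      moreover have "(\<Sum>k\<in>I'. a e k * d k) = (\<Sum>k\<in>I'. a e k * d' k)"
        by (rule sum.cong) (auto simp: d_def I'_def)
      ultimately show ?thesis by simp
    qed
    have "\<forall>e<Suc m. (\<Sum>k\<in>I. a e k * d k) = 0"
    proof (intro allI impI)
      fix e assume e: "e < Suc m"
      show "(\<Sum>k\<in>I. a e k * d k) = 0"
      proof (cases "e = m")
        case True
        thus ?thesis using k0(2) unfolding split by (simp add: d_def)
      next
        case False
        hence em: "e < m" using e by simp
        have "(\<Sum>k\<in>I'. a' e k * d' k) = (\<Sum>k\<in>I'. a e k * d' k) - a e k0 / a m k0 * (\<Sum>k\<in>I'. a m k * d' k)"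
          by (simp add: a'_def algebra_simps sum_subtractf sum_distrib_left sum_divide_distrib)
        thus ?thesis using d'(2) em k0(2) unfolding split by (simp add: d_def field_simps)
      qed
    qed
    moreover have "\<exists>k\<in>I. d k \<noteq> 0" using d'(1) by (auto simp: d_def I'_def)
    ultimately show ?thesis by blast
  qed
qed




definition csize :: "nat \<Rightarrow> (nat\<Rightarrow>nat) \<Rightarrow> nat \<Rightarrow> nat" where
  "csize n c k = card {i. i<n \<and> c i = k}"
definition hc :: "nat \<Rightarrow> (nat\<Rightarrow>nat) \<Rightarrow> nat \<Rightarrow> nat \<Rightarrow> real" where
  "hc n c k i = (if c i = k then 1 / sqrt (real (csize n c k)) else 0)"

lemma sum_if_card: "(\<Sum>i<n. if c i = k then (a::real) else 0) = real (csize n c k) * a"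
proof -
  have "(\<Sum>i<n. if c i = k then (a::real) else 0) = (\<Sum>i\<in>{..<n} \<inter> {i. c i = k}. a)"
    by (simp add: sum.If_cases)
  also have "{..<n} \<inter> {i. c i = k} = {i. i<n \<and> c i = k}" by auto
  finally show ?thesis by (simp add: csize_def)
qed

lemma csize_pos: assumes "i < n" shows "csize n c (c i) > 0"
proof -
  have "i \<in> {j. j<n \<and> c j = c i}" using assms by simp
  thus ?thesis unfolding csize_def by (metis card_gt_0_iff empty_iff finite_Collect_conjI finite_Collect_less_nat)
qed

lemma hc_orth:
  assumes cne: "\<And>k. k<K \<Longrightarrow> \<exists>i<n. c i = k" and kl: "k<K" "l<K"
  shows "(\<Sum>i<n. hc n c k i * hc n c l i) = (if k = l then 1 else 0)"
proof (cases "k = l")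
  case True
  obtain i where i: "i<n" "c i = k" using cne kl by blast
  have pos: "csize n c k > 0" using csize_pos[OF i(1), of c] i by simp
  have "(\<Sum>i<n. hc n c k i * hc n c l i) = (\<Sum>i<n. if c i = k then 1 / real (csize n c k) else 0)"
    using True by (intro sum.cong) (auto simp: hc_def)
  also have "\<dots> = 1" using pos by (simp add: sum_if_card)
  finally show ?thesis using True by simp
next
  case False
  thus ?thesis by (simp add: hc_def)
qed

lemma hc_sum:
  assumes "k<K" "\<exists>i<n. c i = k"
  shows "(\<Sum>i<n. hc n c k i) = sqrt (real (csize n c k))"
proof -
  obtain i where i: "i<n" "c i = k" using assms by blast
  have pos: "csize n c k > 0" using csize_pos[OF i(1), of c] i by simp
  have "(\<Sum>i<n. hc n c k i) = real (csize n c k) / sqrt (real (csize n c k))"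
    by (simp add: hc_def sum_if_card)
  also have "\<dots> = sqrt (real (csize n c k))" using pos by (simp add: real_div_sqrt)
  finally show ?thesis .
qed

lemma sum_csize:
  assumes cok: "\<And>i. i<n \<Longrightarrow> c i < K"
  shows "(\<Sum>k<K. real (csize n c k)) = real n"
proof -
  have "(\<Sum>k<K. real (csize n c k)) = (\<Sum>k<K. \<Sum>i<n. if c i = k then 1 else 0)"
    by (simp add: sum_if_card)
  also have "\<dots> = (\<Sum>i<n. \<Sum>k<K. if c i = k then 1 else 0)" by (rule sum.swap)
  also have "\<dots> = (\<Sum>i<n. 1)" by (intro sum.cong) (auto simp: cok)
  finally show ?thesis by simp
qed

lemma hc_recon:
  assumes cok: "\<And>i. i<n \<Longrightarrow> c i < K"
    and cst: "\<And>i j. i<n \<Longrightarrow> j<n \<Longrightarrow> c i = c j \<Longrightarrow> z i = z j" and j: "j<n"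
  shows "(\<Sum>l<K. (\<Sum>i<n. z i * hc n c l i) * hc n c l j) = (z j :: real)"
proof -
  let ?k = "c j"
  have pos: "csize n c ?k > 0" using csize_pos[OF j] .
  have "(\<Sum>l<K. (\<Sum>i<n. z i * hc n c l i) * hc n c l j) = (\<Sum>l<K. if l = ?k then (\<Sum>i<n. z i * hc n c l i) / sqrt (real (csize n c ?k)) else 0)"
    by (intro sum.cong) (auto simp: hc_def)
  also have "\<dots> = (\<Sum>i<n. z i * hc n c ?k i) / sqrt (real (csize n c ?k))"
    using cok[OF j] by simp
  also have "(\<Sum>i<n. z i * hc n c ?k i) = (\<Sum>i<n. if c i = ?k then z j / sqrt (real (csize n c ?k)) else 0)"
  proof (intro sum.cong refl)
    fix i assume "i \<in> {..<n}"
    thus "z i * hc n c ?k i = (if c i = ?k then z j / sqrt (real (csize n c ?k)) else 0)"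
      using cst[of i j] j by (simp add: hc_def)
  qed
  also have "\<dots> = real (csize n c ?k) * (z j / sqrt (real (csize n c ?k)))" by (rule sum_if_card)
  finally show ?thesis using pos by simp
qed

definition Fc :: "nat \<Rightarrow> nat \<Rightarrow> (nat\<Rightarrow>nat) \<Rightarrow> real mat" where
  "Fc K n c = mat K n (\<lambda>(k,i). if c i = k then 1 else 0)"

lemma FFt: assumes "k < K" shows "(Fc K n c * transpose_mat (Fc K n c)) $$ (k,k) = real (csize n c k)"
proof -
  have "(Fc K n c * transpose_mat (Fc K n c)) $$ (k,k) = (\<Sum>i<n. if c i = k then 1 else 0)"
    using assms unfolding Fc_def apply (simp add: scalar_prod_def lessThan_atLeast0)
    by (rule sum.cong) auto
  thus ?thesis by (simp add: sum_if_card)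
qed

lemma Fc_in:
  assumes cok: "\<And>i. i<n \<Longrightarrow> c i < K" and cne: "\<And>k. k<K \<Longrightarrow> \<exists>i<n. c i = k"
  shows "Fc K n c \<in> indicator_mats K n"
proof -
  have "\<exists>!k. k < K \<and> Fc K n c $$ (k,i) = 1" if "i<n" for i
    using cok[OF that] that by (intro ex1I[of _ "c i"]) (auto simp: Fc_def split: if_splits)
  moreover have "\<exists>i<n. Fc K n c $$ (k,i) = 1" if "k<K" for k
    using cne[OF that] that by (auto simp: Fc_def)
  ultimately show ?thesis unfolding indicator_mats_def by (auto simp: Fc_def)
qed

lemma hc_eq:
  "mat K n (\<lambda>(k,i). hc n c k i) = mat K n (\<lambda>(k,i). Fc K n c $$ (k,i) / sqrt ((Fc K n c * transpose_mat (Fc K n c)) $$ (k,k)))"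
proof (rule eq_matI)
  fix k i assume ki: "k < dim_row (mat K n (\<lambda>(k,i). Fc K n c $$ (k,i) / sqrt ((Fc K n c * transpose_mat (Fc K n c)) $$ (k,k))))"
    "i < dim_col (mat K n (\<lambda>(k,i). Fc K n c $$ (k,i) / sqrt ((Fc K n c * transpose_mat (Fc K n c)) $$ (k,k))))"
  hence "k < K" "i < n" by auto
  thus "mat K n (\<lambda>(k,i). hc n c k i) $$ (k,i) = mat K n (\<lambda>(k,i). Fc K n c $$ (k,i) / sqrt ((Fc K n c * transpose_mat (Fc K n c)) $$ (k,k))) $$ (k,i)"
    by (simp add: FFt) (simp add: hc_def Fc_def)
qed auto

lemma hc_in:
  assumes cok: "\<And>i. i<n \<Longrightarrow> c i < K" and cne: "\<And>k. k<K \<Longrightarrow> \<exists>i<n. c i = k"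
  shows "mat K n (\<lambda>(k,i). hc n c k i) \<in> norm_indicator_mats K n"
  unfolding norm_indicator_mats_def hc_eq using Fc_in[OF cok cne] by blast

lemma hc_from:
  assumes "H \<in> norm_indicator_mats K n"
  shows "\<exists>c. (\<forall>i<n. c i < K) \<and> (\<forall>k<K. \<exists>i<n. c i = k) \<and> H = mat K n (\<lambda>(k,i). hc n c k i)"
proof -
  obtain F where F: "F \<in> indicator_mats K n" and H: "H = mat K n (\<lambda>(k,i). F $$ (k,i) / sqrt ((F * transpose_mat F) $$ (k,k)))"
    using assms unfolding norm_indicator_mats_def by blast
  have Fc: "F \<in> carrier_mat K n" and F01: "\<forall>k<K. \<forall>i<n. F $$ (k,i) = 0 \<or> F $$ (k,i) = 1"
    and Fu: "\<forall>i<n. \<exists>!k. k < K \<and> F $$ (k,i) = 1" and Fne: "\<forall>k<K. \<exists>i<n. F $$ (k,i) = 1"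
    using F unfolding indicator_mats_def by auto
  define c where "c = (\<lambda>i. THE k. k < K \<and> F $$ (k,i) = 1)"
  have c: "c i < K \<and> F $$ (c i, i) = 1" if "i < n" for i
    using theI'[OF Fu[rule_format, OF that]] unfolding c_def by blast
  have Fe: "F $$ (k,i) = (if c i = k then 1 else 0)" if "k<K" "i<n" for k i
  proof -
    have "F $$ (c i, i) = 1" "c i < K" using c[OF that(2)] by auto
    moreover have "F $$ (k,i) = 1 \<Longrightarrow> k = c i" using Fu that \<open>F $$ (c i, i) = 1\<close> \<open>c i < K\<close> by blast
    ultimately show ?thesis using F01 that by auto
  qed
  have FF: "F = Fc K n c" by (rule eq_matI) (use Fc Fe in \<open>auto simp: Fc_def\<close>)
  have cne: "\<forall>k<K. \<exists>i<n. c i = k"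
  proof (intro allI impI)
    fix k assume k: "k < K"
    then obtain i where "i<n" "F $$ (k,i) = 1" using Fne by blast
    thus "\<exists>i<n. c i = k" using Fe[OF k] by (metis one_neq_zero)
  qed
  have "H = mat K n (\<lambda>(k,i). hc n c k i)"
    unfolding H FF hc_eq ..
  thus ?thesis using c cne by blast
qed




lemma mult_idx:
  assumes "A \<in> carrier_mat m k" "B \<in> carrier_mat k n" "i < m" "j < n"
  shows "(A * B) $$ (i,j) = (\<Sum>a<k. A $$ (i,a) * B $$ (a,j))"
  using assms by (simp add: scalar_prod_def lessThan_atLeast0)

lemma fro2_idx:
  assumes "A \<in> carrier_mat p n" "D \<in> carrier_mat p K" "X \<in> carrier_mat K n"
  shows "fro2 (A - D * X) = (\<Sum>l<p. \<Sum>i<n. (A $$ (l,i) - (\<Sum>k<K. D $$ (l,k) * X $$ (k,i)))^2)"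
  using assms unfolding fro2_def by (auto simp: scalar_prod_def lessThan_atLeast0 intro!: sum.cong)

lemma svd_idx:
  assumes "U \<in> carrier_mat p r" "S \<in> carrier_mat r r" "V \<in> carrier_mat r n"
    and diag: "\<forall>i<r. \<forall>j<r. i \<noteq> j \<longrightarrow> S $$ (i,j) = 0"
    and l: "l < p" and i: "i < n"
  shows "(U * S * V) $$ (l,i) = (\<Sum>a<r. U $$ (l,a) * S $$ (a,a) * V $$ (a,i))"
proof -
  have US: "U * S \<in> carrier_mat p r" using assms by auto
  have "(U * S * V) $$ (l,i) = (\<Sum>a<r. (U * S) $$ (l,a) * V $$ (a,i))"
    using mult_idx[OF US assms(3) l i] .
  also have "\<dots> = (\<Sum>a<r. U $$ (l,a) * S $$ (a,a) * V $$ (a,i))"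
  proof (intro sum.cong refl)
    fix a assume a: "a \<in> {..<r}"
    have "(U * S) $$ (l,a) = (\<Sum>b<r. U $$ (l,b) * S $$ (b,a))"
      using mult_idx[OF assms(1,2) l] a by simp
    also have "\<dots> = (\<Sum>b<r. if b = a then U $$ (l,a) * S $$ (a,a) else 0)"
      using diag a by (intro sum.cong refl) auto
    also have "\<dots> = U $$ (l,a) * S $$ (a,a)" using a by simp
    finally show "(U * S) $$ (l,a) * V $$ (a,i) = U $$ (l,a) * S $$ (a,a) * V $$ (a,i)" by simp
  qed
  finally show ?thesis .
qed

lemma orth_cols:
  assumes "U \<in> carrier_mat p r" "transpose_mat U * U = 1\<^sub>m r" "a < r" "b < r"
  shows "(\<Sum>l<p. U $$ (l,a) * U $$ (l,b)) = (if a = b then 1 else (0::real))"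
proof -
  have "(transpose_mat U * U) $$ (a,b) = (\<Sum>l<p. U $$ (l,a) * U $$ (l,b))"
    using assms by (subst mult_idx[of _ r p _ r]) auto
  thus ?thesis using assms by simp
qed

lemma orth_rows:
  assumes "V \<in> carrier_mat r n" "V * transpose_mat V = 1\<^sub>m r" "a < r" "b < r"
  shows "(\<Sum>i<n. V $$ (a,i) * V $$ (b,i)) = (if a = b then 1 else (0::real))"
proof -
  have "(V * transpose_mat V) $$ (a,b) = (\<Sum>i<n. V $$ (a,i) * V $$ (b,i))"
    using assms by (subst mult_idx[of _ r n _ r]) auto
  thus ?thesis using assms by simp
qed

lemma one_idx:
  assumes "A \<in> carrier_mat p n" "A *\<^sub>v vec n (\<lambda>_. 1) = 0\<^sub>v p" "l < p"
  shows "(\<Sum>i<n. A $$ (l,i)) = (0::real)"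
proof -
  have "(\<Sum>i<n. A $$ (l,i)) = (A *\<^sub>v vec n (\<lambda>_. 1)) $ l"
    using assms(1,3) by (simp add: scalar_prod_def lessThan_atLeast0)
  also have "\<dots> = 0" by (subst assms(2)) (simp add: assms(3))
  finally show ?thesis .
qed

lemma W_idx:
  assumes "A \<in> carrier_mat p n" "i < n" "j < n"
  shows "W_of A $$ (i,j) = sqrt (beta_of A) * sqrt (beta_of A) + (\<Sum>l<p. A $$ (l,i) * A $$ (l,j))"
proof -
  have At: "A_tilde A \<in> carrier_mat (Suc p) n" using assms by (simp add: A_tilde_def)
  have "W_of A $$ (i,j) = (\<Sum>t<Suc p. A_tilde A $$ (t,i) * A_tilde A $$ (t,j))"
    unfolding W_of_def using At assms by (subst mult_idx[of _ n "Suc p" _ n]) auto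
  also have "\<dots> = A_tilde A $$ (0,i) * A_tilde A $$ (0,j) + (\<Sum>l<p. A_tilde A $$ (Suc l,i) * A_tilde A $$ (Suc l,j))"
    by (simp only: sum.lessThan_Suc_shift)
  also have "\<dots> = sqrt (beta_of A) * sqrt (beta_of A) + (\<Sum>l<p. A $$ (l,i) * A $$ (l,j))"
    using assms by (simp add: A_tilde_def)
  finally show ?thesis .
qed

lemma W_dim: "A \<in> carrier_mat p n \<Longrightarrow> dim_row (W_of A) = n"
  by (simp add: W_of_def A_tilde_def)

lemma beta_idx:
  assumes "A \<in> carrier_mat p n"
  shows "beta_of A = - Min {(\<Sum>l<p. A $$ (l,i) * A $$ (l,j)) | i j. i < n \<and> j < n}"
proof -
  have "{(transpose_mat A * A) $$ (i,j) | i j. i < dim_col A \<and> j < dim_col A} = {(\<Sum>l<p. A $$ (l,i) * A $$ (l,j)) | i j. i < n \<and> j < n}"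
  proof -
    have e: "(transpose_mat A * A) $$ (i,j) = (\<Sum>l<p. A $$ (l,i) * A $$ (l,j))" if "i<n" "j<n" for i j
      using assms that by (subst mult_idx[of _ n p _ n]) auto
    have dA: "dim_col A = n" using assms by simp
    show ?thesis
    proof (rule Set.set_eqI, rule iffI)
      fix x assume "x \<in> {(transpose_mat A * A) $$ (i,j) | i j. i < dim_col A \<and> j < dim_col A}"
      then obtain i j where ij: "x = (transpose_mat A * A) $$ (i,j)" "i<n" "j<n" using dA by auto
      thus "x \<in> {(\<Sum>l<p. A $$ (l,i) * A $$ (l,j)) | i j. i < n \<and> j < n}" using e[OF ij(2,3)] by auto
    next
      fix x assume "x \<in> {(\<Sum>l<p. A $$ (l,i) * A $$ (l,j)) | i j. i < n \<and> j < n}"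
      then obtain i j where ij: "x = (\<Sum>l<p. A $$ (l,i) * A $$ (l,j))" "i<n" "j<n" by auto
      thus "x \<in> {(transpose_mat A * A) $$ (i,j) | i j. i < dim_col A \<and> j < dim_col A}"
        using e[OF ij(2,3)] dA ij(2,3) unfolding ij(1) by (metis (mono_tags, lifting) mem_Collect_eq)
    qed
  qed
  thus ?thesis unfolding beta_of_def by simp
qed





lemma rt_const:
  fixes x :: "nat \<Rightarrow> 'b"
  assumes "(i,j) \<in> (E \<union> E\<inverse>)\<^sup>*" "\<And>a b. (a,b)\<in>E \<Longrightarrow> x a = x b"
  shows "x i = x j"
  using assms(1)
proof (induction rule: rtrancl_induct)
  case base then show ?case by simp
next
  case (step y z)
  thus ?case using assms(2) by auto
qed

lemma equiv_rt: "equiv UNIV ((E \<union> E\<inverse>)\<^sup>*)"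
proof -
  have "sym (E \<union> E\<inverse>)" by (auto simp: sym_def)
  hence "sym ((E \<union> E\<inverse>)\<^sup>*)" by (rule sym_rtrancl)
  thus ?thesis unfolding equiv_def by (auto simp: refl_rtrancl trans_rtrancl)
qed





lemma comp_enum:
  fixes n K :: nat and R :: "(nat \<times> nat) set"
  assumes eq: "equiv UNIV R" and card: "card ({0..<n} // R) = K"
  shows "\<exists>cs. (\<forall>i<n. cs i < K) \<and> (\<forall>k<K. \<exists>i<n. cs i = k) \<and> (\<forall>i<n. \<forall>j<n. cs i = cs j \<longleftrightarrow> (i,j) \<in> R)"
proof -
  have fin: "finite ({0..<n} // R)" unfolding quotient_def by (intro finite_UN_I) auto
  obtain g where g: "bij_betw g {0..<K} ({0..<n} // R)"
    using ex_bij_betw_nat_finite[OF fin] card by auto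
  define cs where "cs i = inv_into {0..<K} g (R``{i})" for i
  have inQ: "R``{i} \<in> {0..<n} // R" if "i < n" for i using that by (intro quotientI) simp
  have cs1: "cs i < K \<and> g (cs i) = R``{i}" if "i < n" for i
  proof -
    have gi: "R``{i} \<in> g ` {0..<K}" using g inQ[OF that] by (simp add: bij_betw_def)
    hence "cs i \<in> {0..<K}" unfolding cs_def by (rule inv_into_into)
    moreover from gi have "g (cs i) = R``{i}" unfolding cs_def by (rule f_inv_into_f)
    ultimately show ?thesis by simp
  qed
  have "\<forall>k<K. \<exists>i<n. cs i = k"
  proof (intro allI impI)
    fix k assume k: "k < K"
    hence "g k \<in> {0..<n} // R" using g by (auto simp: bij_betw_def)
    then obtain i where i: "i \<in> {0..<n}" "g k = R``{i}" by (auto elim: quotientE)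
    have "cs i = k" unfolding cs_def i(2)[symmetric] using g k by (auto simp: bij_betw_def)
    thus "\<exists>i<n. cs i = k" using i by auto
  qed
  moreover have "cs i = cs j \<longleftrightarrow> (i,j) \<in> R" if "i<n" "j<n" for i j
  proof
    assume "cs i = cs j"
    hence "R``{i} = R``{j}" using cs1[OF that(1)] cs1[OF that(2)] by simp
    thus "(i,j) \<in> R" using eq_equiv_class_iff[OF eq] by auto
  next
    assume "(i,j) \<in> R"
    hence "R``{i} = R``{j}" using eq_equiv_class_iff[OF eq] by auto
    hence "g (cs i) = g (cs j)" using cs1[OF that(1)] cs1[OF that(2)] by simp
    moreover have "inj_on g {0..<K}" using g by (simp add: bij_betw_def)
    ultimately show "cs i = cs j" using cs1[OF that(1)] cs1[OF that(2)] unfolding inj_on_def by simp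
  qed
  ultimately show ?thesis using cs1 by blast
qed





lemma bij_clusters:
  assumes cok: "\<forall>i<n. c i < K" and cne: "\<forall>k<K. \<exists>i<n. c i = k"
    and csok: "\<forall>i<n. cs i < (K::nat)"
    and hyp: "\<forall>i<n. \<forall>j<n. cs i = cs j \<longrightarrow> c i = c j"
    and ij: "i < n" "j < n" "c i = c j"
  shows "cs i = cs j"
proof -
  define phi where "phi k = c (SOME i. i<n \<and> cs i = k)" for k
  have phi: "phi (cs i) = c i" if "i<n" for i
  proof -
    define i' where "i' = (SOME i'. i'<n \<and> cs i' = cs i)"
    have "\<exists>i'. i'<n \<and> cs i' = cs i" using that by blast
    hence i': "i' < n \<and> cs i' = cs i" unfolding i'_def by (rule someI_ex)
    have "phi (cs i) = c i'" unfolding phi_def i'_def ..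
    also have "\<dots> = c i" using hyp i' that by blast
    finally show ?thesis .
  qed
  have "phi ` {..<K} \<supseteq> {..<K}"
  proof
    fix k assume "k \<in> {..<K}"
    then obtain i where "i<n" "c i = k" using cne by auto
    thus "k \<in> phi ` {..<K}" using phi[OF \<open>i<n\<close>] csok by (intro image_eqI[of _ _ "cs i"]) auto
  qed
  hence "card (phi ` {..<K}) \<ge> K" using card_mono[OF finite_imageI[OF finite_lessThan], of "{..<K}" phi] by simp
  moreover have "card (phi ` {..<K}) \<le> K" using card_image_le[of "{..<K}" phi] by simp
  ultimately have "inj_on phi {..<K}" by (intro eq_card_imp_inj_on) auto
  moreover have "phi (cs i) = phi (cs j)" using phi ij by simp
  ultimately show ?thesis using csok ij(1,2) by (meson inj_onD lessThan_iff)
qed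






lemma sum_by_cluster:
  fixes f g :: "nat \<Rightarrow> real"
  assumes cok: "\<forall>i<n. c i < K"
  shows "(\<Sum>i<n. f (c i) * g i) = (\<Sum>k<K. f k * (\<Sum>i<n. if c i = k then g i else 0))"
proof -
  have "(\<Sum>k<K. f k * (\<Sum>i<n. if c i = k then g i else 0)) = (\<Sum>k<K. \<Sum>i<n. if c i = k then f k * g i else 0)"
    by (simp add: sum_distrib_left if_distrib cong: if_cong)
  also have "\<dots> = (\<Sum>i<n. \<Sum>k<K. if c i = k then f k * g i else 0)" by (rule sum.swap)
  also have "\<dots> = (\<Sum>i<n. f (c i) * g i)"
  proof (intro sum.cong refl)
    fix i assume "i \<in> {..<n}"
    hence "c i \<in> {..<K}" using cok by simp
    thus "(\<Sum>k<K. if c i = k then f k * g i else 0) = f (c i) * g i"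
      by (simp add: sum.delta[OF finite_lessThan, of "c i" "\<lambda>k. f k * g i", unfolded eq_commute[of "c i"]] eq_commute[of _ "c i"])
  qed
  finally show ?thesis by simp
qed

lemma QM:
  fixes a :: "nat \<Rightarrow> nat \<Rightarrow> real"
  shows "(\<Sum>l<p. (\<Sum>i<n. a l i * x i)^2) = (\<Sum>i<n. \<Sum>j<n. (\<Sum>l<p. a l i * a l j) * x i * x j)"
proof -
  have "(\<Sum>l<p. (\<Sum>i<n. a l i * x i)^2) = (\<Sum>l<p. \<Sum>i<n. \<Sum>j<n. a l i * a l j * x i * x j)"
    by (simp add: power2_eq_square sum_product algebra_simps)
  also have "\<dots> = (\<Sum>i<n. \<Sum>l<p. \<Sum>j<n. a l i * a l j * x i * x j)" by (rule sum.swap)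
  also have "\<dots> = (\<Sum>i<n. \<Sum>j<n. \<Sum>l<p. a l i * a l j * x i * x j)" by (simp add: sum.swap[of _ "{..<p}"])
  also have "\<dots> = (\<Sum>i<n. \<Sum>j<n. (\<Sum>l<p. a l i * a l j) * x i * x j)" by (simp add: sum_distrib_right)
  finally show ?thesis .
qed

lemma Qsplit_gen:
  fixes M :: "nat \<Rightarrow> nat \<Rightarrow> real"
  shows "(\<Sum>i<n. \<Sum>j<n. (b + M i j) * x i * x j) = (\<Sum>i<n. \<Sum>j<n. M i j * x i * x j) + b * (\<Sum>i<n. x i)^2"
  by (simp add: power2_eq_square sum_product algebra_simps sum.distrib sum_distrib_left)




theorem theorem3:
  fixes A U S V H :: "real mat" and p n K :: nat
  assumes A_dim: "A \<in> carrier_mat p n"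
    and A_one: "A *\<^sub>v vec n (\<lambda>_. 1) = 0\<^sub>v p"
    and svd: "compact_svd p n A U S V"
    and K_lo: "2 \<le> K" and K_hi: "K \<le> vec_space.rank p A + 1"
    and H_in: "H \<in> norm_indicator_mats K n"
    and H_opt: "\<exists>D0 \<in> carrier_mat p K. \<forall>D \<in> carrier_mat p K. \<forall>X \<in> norm_indicator_mats K n.
                  fro2 (A - D0 * H) \<le> fro2 (A - D * X)"
    and ideal: "ideal_graph (W_of A) K"
  shows "\<exists>R \<in> carrier_mat K K. transpose_mat R * R = 1\<^sub>m K \<and> stacked_V K n V = R * H"
proof -
  obtain r where Uc: "U \<in> carrier_mat p r" and Sc: "S \<in> carrier_mat r r" and Vc: "V \<in> carrier_mat r n"
    and UU: "transpose_mat U * U = 1\<^sub>m r" and VV: "V * transpose_mat V = 1\<^sub>m r"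
    and diag: "\<forall>i<r. \<forall>j<r. i \<noteq> j \<longrightarrow> S $$ (i,j) = 0" and spos: "\<forall>i<r. S $$ (i,i) > 0"
    and sdesc: "\<forall>i<r. \<forall>j<r. i \<le> j \<longrightarrow> S $$ (i,i) \<ge> S $$ (j,j)" and Aeq: "A = U * S * V"
    using svd unfolding compact_svd_def by blast
  define a where "a l i = A $$ (l,i)" for l i
  define s where "s k = S $$ (k,k)" for k
  define v where "v k i = V $$ (k,i)" for k i
  define M where "M i j = (\<Sum>l<p. a l i * a l j)" for i j
  define \<beta> where "\<beta> = beta_of A"
  define w where "w i j = \<beta> + M i j" for i j
  define B where "B = \<beta> * real n"
  define Q where "Q x = (\<Sum>i<n. \<Sum>j<n. w i j * x i * x j)" for x
  define P where "P x = (\<Sum>l<p. (\<Sum>i<n. a l i * x i)^2)" for x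
  define nrm where "nrm x = (\<Sum>i<n. (x i)^2)" for x :: "nat \<Rightarrow> real"

  have a_svd: "a l i = (\<Sum>k<r. U $$ (l,k) * s k * v k i)" if "l<p" "i<n" for l i
    unfolding a_def s_def v_def Aeq using svd_idx[OF Uc Sc Vc diag that] .
  have Uorth: "(\<Sum>l<p. U$$(l,x) * U$$(l,y)) = (if x=y then 1 else 0)" if "x<r" "y<r" for x y
    using orth_cols[OF Uc UU that] .
  have Vorth: "(\<Sum>i<n. v x i * v y i) = (if x=y then 1 else 0)" if "x<r" "y<r" for x y
    unfolding v_def using orth_rows[OF Vc VV that] .
  have arow: "(\<Sum>i<n. a l i) = 0" if "l<p" for l unfolding a_def using one_idx[OF A_dim A_one that] .

  have Ay: "(\<Sum>i<n. a l i * y i) = (\<Sum>k<r. (s k * (\<Sum>i<n. y i * v k i)) * U$$(l,k))" if "l<p" for l y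
  proof -
    have "(\<Sum>i<n. a l i * y i) = (\<Sum>i<n. \<Sum>k<r. U$$(l,k) * s k * v k i * y i)"
      using a_svd that by (simp add: sum_distrib_right)
    also have "\<dots> = (\<Sum>k<r. (s k * (\<Sum>i<n. y i * v k i)) * U$$(l,k))"
      by (subst sum.swap) (simp add: sum_distrib_left algebra_simps)
    finally show ?thesis .
  qed
  have P_svd: "P y = (\<Sum>k<r. (s k)^2 * (\<Sum>i<n. y i * v k i)^2)" for y
  proof -
    have "P y = (\<Sum>l<p. (\<Sum>k<r. (s k * (\<Sum>i<n. y i * v k i)) * U$$(l,k))^2)"
      unfolding P_def by (intro sum.cong refl) (simp add: Ay)
    also have "\<dots> = (\<Sum>k<r. (s k * (\<Sum>i<n. y i * v k i))^2)"
      by (rule orth_sum[where f="\<lambda>k l. U$$(l,k)"]) (rule Uorth)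
    finally show ?thesis by (simp add: power_mult_distrib)
  qed
  have vsum: "(\<Sum>i<n. v k i) = 0" if k: "k<r" for k
  proof -
    have "0 = (\<Sum>l<p. U$$(l,k) * (\<Sum>i<n. a l i))" using arow by simp
    also have "\<dots> = (\<Sum>l<p. U$$(l,k) * (\<Sum>k'<r. (s k' * (\<Sum>i<n. v k' i)) * U$$(l,k')))"
      using Ay[of _ "\<lambda>_. 1"] by (intro sum.cong refl) simp
    also have "\<dots> = s k * (\<Sum>i<n. v k i)"
      by (rule orth_dot[where f="\<lambda>k l. U$$(l,k)"]) (use Uorth k in auto)
    finally have "s k * (\<Sum>i<n. v k i) = 0" by simp
    moreover have "s k > 0" using spos k by (simp add: s_def)
    ultimately show ?thesis by simp
  qed
  have Pv: "P (v b) = (s b)^2" if b: "b<r" for b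
  proof -
    have "P (v b) = (\<Sum>k<r. (s k)^2 * (if b = k then 1 else 0))"
      unfolding P_svd by (intro sum.cong refl) (simp add: Vorth b)
    also have "\<dots> = (\<Sum>k<r. if b = k then (s k)^2 else 0)" by (intro sum.cong) auto
    finally show ?thesis using b by simp
  qed

  have Mrow: "(\<Sum>j<n. M i j) = 0" if "i<n" for i
  proof -
    have "(\<Sum>j<n. M i j) = (\<Sum>l<p. a l i * (\<Sum>j<n. a l j))"
      unfolding M_def by (subst sum.swap) (simp add: sum_distrib_left)
    thus ?thesis using arow by simp
  qed
  have PM: "P x = (\<Sum>i<n. \<Sum>j<n. M i j * x i * x j)" for x
    unfolding P_def M_def by (rule QM)
  have QP: "Q x = P x + \<beta> * (\<Sum>i<n. x i)^2" for x
    unfolding Q_def w_def PM by (rule Qsplit_gen)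

  define E where "E = {(i,j). i < n \<and> j < n \<and> W_of A $$ (i,j) > 0}"
  define R where "R = (E \<union> E\<inverse>)\<^sup>*"
  have cardK: "card ({0..<n} // R) = K"
    using ideal unfolding ideal_graph_def Let_def E_def R_def W_dim[OF A_dim] by simp
  have npos: "n > 0"
  proof (rule ccontr)
    assume "\<not> n > 0"
    hence "{0..<n} // R = {}" by (simp add: quotient_def)
    thus False using cardK K_lo by simp
  qed
  have Anz: "\<exists>l<p. \<exists>i<n. a l i \<noteq> 0"
  proof (rule ccontr)
    assume "\<not> ?thesis"
    hence "A = 0\<^sub>m p n" using A_dim by (intro eq_matI) (auto simp: a_def)
    hence "vec_space.rank p A = 0" by (simp add: vec_space.rank_0I)
    thus False using K_hi K_lo by simp
  qed
  then obtain l0 i0 where li: "l0<p" "i0<n" "a l0 i0 \<noteq> 0" by blast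
  have Mii: "M i0 i0 > 0"
  proof -
    have "(a l0 i0)^2 \<le> (\<Sum>l<p. (a l i0)^2)"
      by (rule member_le_sum[of l0 "{..<p}" "\<lambda>l. (a l i0)^2"]) (use li in auto)
    moreover have "(a l0 i0)^2 > 0" using li by simp
    ultimately show ?thesis by (simp add: M_def power2_eq_square)
  qed
  have Mneg: "\<exists>j<n. M i0 j < 0"
  proof (rule ccontr)
    assume "\<not> ?thesis"
    hence nn: "\<And>j. j\<in>{..<n} \<Longrightarrow> 0 \<le> M i0 j" by auto
    have "\<forall>j\<in>{..<n}. M i0 j = 0" using Mrow[OF li(2)] sum_nonneg_eq_0_iff[OF finite_lessThan nn] by simp
    thus False using Mii li by simp
  qed
  define MS where "MS = {M i j | i j. i < n \<and> j < n}"
  have finMS: "finite MS" unfolding MS_def by (rule finite_image_set2) auto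
  have bidx: "\<beta> = - Min MS" unfolding \<beta>_def MS_def M_def a_def by (rule beta_idx[OF A_dim])
  have Mge: "M i j \<ge> - \<beta>" if "i<n" "j<n" for i j
  proof -
    have "M i j \<in> MS" using that unfolding MS_def by blast
    thus ?thesis using Min_le[OF finMS] bidx by simp
  qed
  have bpos: "\<beta> > 0"
  proof -
    obtain j where j: "j<n" "M i0 j < 0" using Mneg by blast
    have "M i0 j \<in> MS" using j li unfolding MS_def by blast
    hence "Min MS \<le> M i0 j" using Min_le[OF finMS] by simp
    thus ?thesis using bidx j by simp
  qed
  have Bpos: "B > 0" using bpos npos by (simp add: B_def)
  have wW: "W_of A $$ (i,j) = w i j" if "i<n" "j<n" for i j
    using W_idx[OF A_dim that] bpos by (simp add: w_def M_def a_def \<beta>_def)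
  have wsym: "w i j = w j i" if "i<n" "j<n" for i j by (simp add: w_def M_def mult.commute)
  have wrow: "(\<Sum>j<n. w i j) = B" if "i<n" for i
    using Mrow[OF that] by (simp add: w_def sum.distrib B_def mult.commute)
  have wnn: "0 \<le> w i j" if "i<n" "j<n" for i j using Mge[OF that] by (simp add: w_def)
  have E_w: "E = {(i,j). i < n \<and> j < n \<and> w i j > 0}" unfolding E_def using wW by auto
  have Qle: "Q x \<le> B * nrm x" for x
    unfolding Q_def nrm_def by (rule lap_le[OF wsym wrow wnn])
  have Qeq: "x i = x j" if "Q x = B * nrm x" "i<n" "j<n" "w i j > 0" for x i j
    by (rule lap_eq[OF wsym wrow wnn]) (use that in \<open>auto simp: Q_def nrm_def\<close>)
  have Qconst: "Q x = B * nrm x" if "\<And>i j. i<n \<Longrightarrow> j<n \<Longrightarrow> w i j > 0 \<Longrightarrow> x i = x j" for x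
    unfolding Q_def nrm_def by (rule lap_const[where w=w and c=B]) (blast intro: wsym wrow wnn that)+

  obtain cs where csok: "\<forall>i<n. cs i < K" and csne: "\<forall>k<K. \<exists>i<n. cs i = k"
    and csR: "\<forall>i<n. \<forall>j<n. cs i = cs j \<longleftrightarrow> (i,j) \<in> R"
    using comp_enum[OF equiv_rt cardK[unfolded R_def]] unfolding R_def by blast
  have cs_edge: "cs i = cs j" if "i<n" "j<n" "w i j > 0" for i j
  proof -
    have "(i,j) \<in> E" using that E_w by simp
    hence "(i,j) \<in> R" unfolding R_def by auto
    thus ?thesis using csR that by blast
  qed
  obtain c where cok: "\<forall>i<n. c i < K" and cne: "\<forall>k<K. \<exists>i<n. c i = k"
    and Hc: "H = mat K n (\<lambda>(k,i). hc n c k i)" using hc_from[OF H_in] by blast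
  obtain D0 where D0: "D0 \<in> carrier_mat p K"
    and D0opt: "\<forall>D \<in> carrier_mat p K. \<forall>X \<in> norm_indicator_mats K n. fro2 (A - D0 * H) \<le> fro2 (A - D * X)"
    using H_opt by blast
  have fro_hc: "fro2 (A - D * mat K n (\<lambda>(k,i). hc n c' k i)) =
      (\<Sum>l<p. nrm (a l)) - (\<Sum>k<K. P (hc n c' k)) + (\<Sum>l<p. \<Sum>k<K. (D$$(l,k) - (\<Sum>i<n. a l i * hc n c' k i))^2)"
    if D: "D \<in> carrier_mat p K" and cne': "\<forall>k<K. \<exists>i<n. c' i = k" for D c'
  proof -
    have orth: "(\<Sum>i<n. hc n c' x i * hc n c' y i) = (if x = y then 1 else 0)" if "x<K" "y<K" for x y
      by (rule hc_orth) (use cne' that in auto)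
    have "fro2 (A - D * mat K n (\<lambda>(k,i). hc n c' k i)) = (\<Sum>l<p. \<Sum>i<n. (a l i - (\<Sum>k<K. D $$ (l,k) * hc n c' k i))^2)"
      unfolding a_def by (subst fro2_idx[OF A_dim D]) (auto intro!: sum.cong)
    also have "\<dots> = (\<Sum>l<p. nrm (a l) - (\<Sum>k<K. (\<Sum>i<n. a l i * hc n c' k i)^2) + (\<Sum>k<K. (D$$(l,k) - (\<Sum>i<n. a l i * hc n c' k i))^2))"
      unfolding nrm_def by (intro sum.cong refl kmeans_row) (rule orth)
    also have "\<dots> = (\<Sum>l<p. nrm (a l)) - (\<Sum>l<p. \<Sum>k<K. (\<Sum>i<n. a l i * hc n c' k i)^2) + (\<Sum>l<p. \<Sum>k<K. (D$$(l,k) - (\<Sum>i<n. a l i * hc n c' k i))^2)"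
      by (simp add: sum.distrib sum_subtractf)
    also have "(\<Sum>l<p. \<Sum>k<K. (\<Sum>i<n. a l i * hc n c' k i)^2) = (\<Sum>k<K. P (hc n c' k))"
      unfolding P_def by (rule sum.swap)
    finally show ?thesis .
  qed
  have Phc: "(\<Sum>k<K. P (hc n c' k)) = (\<Sum>k<K. Q (hc n c' k)) - B"
    if cok': "\<forall>i<n. c' i < K" and cne': "\<forall>k<K. \<exists>i<n. c' i = k" for c'
  proof -
    have "(\<Sum>k<K. P (hc n c' k)) = (\<Sum>k<K. Q (hc n c' k) - \<beta> * real (csize n c' k))"
    proof (intro sum.cong refl)
      fix k assume k: "k \<in> {..<K}"
      have "(\<Sum>i<n. hc n c' k i) = sqrt (real (csize n c' k))" using hc_sum[of k K n c'] cne' k by auto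
      thus "P (hc n c' k) = Q (hc n c' k) - \<beta> * real (csize n c' k)" unfolding QP by simp
    qed
    also have "\<dots> = (\<Sum>k<K. Q (hc n c' k)) - \<beta> * real n"
      using sum_csize[of n c' K] cok' by (simp add: sum_subtractf sum_distrib_left[symmetric])
    finally show ?thesis by (simp add: B_def)
  qed
  have nrm_hc: "nrm (hc n c' k) = 1" if cne': "\<forall>k<K. \<exists>i<n. c' i = k" and k: "k<K" for c' k
    using hc_orth[of K n c' k k] cne' k by (simp add: nrm_def power2_eq_square)
  define Xs where "Xs = mat K n (\<lambda>(k,i). hc n cs k i)"
  define Ds where "Ds = mat p K (\<lambda>(l,k). \<Sum>i<n. a l i * hc n cs k i)"
  have Ds: "Ds \<in> carrier_mat p K" by (simp add: Ds_def)
  have Xs: "Xs \<in> norm_indicator_mats K n" unfolding Xs_def by (rule hc_in) (use csok csne in auto)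
  have "fro2 (A - D0 * H) \<le> fro2 (A - Ds * Xs)" using D0opt Ds Xs by blast
  hence ineq: "(\<Sum>l<p. nrm (a l)) - (\<Sum>k<K. P (hc n c k)) \<le> (\<Sum>l<p. nrm (a l)) - (\<Sum>k<K. P (hc n cs k))"
  proof -
    assume le: "fro2 (A - D0 * H) \<le> fro2 (A - Ds * Xs)"
    have "fro2 (A - Ds * Xs) = (\<Sum>l<p. nrm (a l)) - (\<Sum>k<K. P (hc n cs k))"
      unfolding Xs_def fro_hc[OF Ds csne] by (simp add: Ds_def)
    moreover have "fro2 (A - D0 * H) \<ge> (\<Sum>l<p. nrm (a l)) - (\<Sum>k<K. P (hc n c k))"
      unfolding Hc fro_hc[OF D0 cne] by (simp add: sum_nonneg)
    ultimately show ?thesis using le by linarith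
  qed
  have Qxs: "Q (hc n cs k) = B" if "k<K" for k
  proof -
    have "Q (hc n cs k) = B * nrm (hc n cs k)"
      by (rule Qconst) (auto simp: hc_def cs_edge)
    thus ?thesis using nrm_hc[OF csne that] by simp
  qed
  have Qh_le: "Q (hc n c k) \<le> B" if "k<K" for k using Qle[of "hc n c k"] nrm_hc[OF cne that] by simp
  have sumQ: "(\<Sum>k<K. Q (hc n c k)) \<ge> real K * B"
    using ineq Phc[OF cok cne] Phc[OF csok csne] Qxs by simp
  have Qh: "Q (hc n c k) = B" if k: "k<K" for k
  proof -
    have nn: "\<And>k. k\<in>{..<K} \<Longrightarrow> 0 \<le> B - Q (hc n c k)" using Qh_le by simp
    have "(\<Sum>k<K. B - Q (hc n c k)) \<le> 0" using sumQ by (simp add: sum_subtractf)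
    hence "(\<Sum>k<K. B - Q (hc n c k)) = 0" using sum_nonneg[of "{..<K}" "\<lambda>k. B - Q (hc n c k)", OF nn] by linarith
    hence "\<forall>k\<in>{..<K}. B - Q (hc n c k) = 0" using sum_nonneg_eq_0_iff[OF finite_lessThan nn] by simp
    thus ?thesis using k by simp
  qed
  have c_edge: "c i = c j" if ij: "i<n" "j<n" "w i j > 0" for i j
  proof -
    have k: "c i < K" using cok ij by simp
    have "hc n c (c i) i = hc n c (c i) j"
      by (rule Qeq[OF _ ij]) (use Qh[OF k] nrm_hc[OF cne k] in simp)
    moreover have "hc n c (c i) i \<noteq> 0" using csize_pos[OF ij(1), of c] by (simp add: hc_def)
    ultimately show ?thesis by (auto simp: hc_def split: if_splits)
  qed
  have c_R: "c i = c j" if "(i,j) \<in> R" for i j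
    by (rule rt_const[OF that[unfolded R_def]]) (use c_edge E_w in auto)
  have cs_c: "cs i = cs j" if ij: "i<n" "j<n" "c i = c j" for i j
    by (rule bij_clusters[OF cok cne csok _ ij]) (use csR c_R in blast)
  define m where "m = min r (K - 2)"
  define coef where "coef e k = (if e < m then (\<Sum>i<n. if c i = k then v e i else 0) else real (csize n c k))" for e k
  have SmK: "Suc m < card {..<K}" using K_lo by (simp add: m_def)
  obtain d where d: "\<exists>k\<in>{..<K}. d k \<noteq> 0" "\<forall>e<Suc m. (\<Sum>k\<in>{..<K}. coef e k * d k) = 0"
    using lin_sys_gen[OF finite_lessThan SmK, of coef] by blast
  define y where "y i = d (c i)" for i
  have yv: "(\<Sum>i<n. y i * v e i) = 0" if e: "e < m" for e
  proof -
    have "(\<Sum>i<n. y i * v e i) = (\<Sum>k<K. d k * (\<Sum>i<n. if c i = k then v e i else 0))"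
      unfolding y_def by (rule sum_by_cluster[OF cok])
    also have "\<dots> = (\<Sum>k<K. coef e k * d k)" using e by (simp add: coef_def mult.commute)
    finally show ?thesis using d(2) e by simp
  qed
  have ysum: "(\<Sum>i<n. y i) = 0"
  proof -
    have "(\<Sum>i<n. y i) = (\<Sum>i<n. d (c i) * 1)" by (simp add: y_def)
    also have "\<dots> = (\<Sum>k<K. d k * (\<Sum>i<n. if c i = k then 1 else 0))" by (rule sum_by_cluster[OF cok])
    also have "\<dots> = (\<Sum>k<K. coef m k * d k)" by (simp add: coef_def sum_if_card mult.commute)
    finally show ?thesis using d(2) by simp
  qed
  have ynrm: "nrm y > 0"
  proof -
    obtain k where k: "k<K" "d k \<noteq> 0" using d(1) by auto
    obtain i where i: "i<n" "c i = k" using cne k by auto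
    have "(y i)^2 \<le> nrm y" unfolding nrm_def by (rule member_le_sum) (use i in auto)
    moreover have "(y i)^2 > 0" using i k by (simp add: y_def)
    ultimately show ?thesis by linarith
  qed
  have Py: "P y = B * nrm y"
  proof -
    have "Q y = B * nrm y" by (rule Qconst) (simp add: y_def c_edge)
    thus ?thesis using QP[of y] ysum by simp
  qed
  have bes: "(\<Sum>k<r. (\<Sum>i<n. y i * v k i)^2) \<le> nrm y"
    unfolding nrm_def by (rule bessel) (rule Vorth)
  have key: "K - 2 < r \<and> B \<le> (s (K-2))^2"
  proof (rule ccontr)
    assume neg: "\<not> ?thesis"
    have small: "(s k)^2 < B" if "k<r" "m \<le> k" for k
    proof (cases "K - 2 < r")
      case True
      hence mK: "m = K - 2" by (simp add: m_def)
      have "B > (s (K-2))^2" using neg True by simp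
      moreover have "s k \<le> s (K-2)" "0 < s k" using sdesc spos that True mK by (auto simp: s_def)
      ultimately show ?thesis using power_mono[of "s k" "s (K-2)" 2] by linarith
    next
      case False
      hence "m = r" by (simp add: m_def)
      thus ?thesis using that by simp
    qed
    define t where "t k = (\<Sum>i<n. y i * v k i)" for k
    have tz: "t k = 0" if "k < m" for k using yv that by (simp add: t_def)
    have nn: "0 \<le> (B - (s k)^2) * (t k)^2" if "k \<in> {..<r}" for k
    proof (cases "k < m")
      case True thus ?thesis using tz by simp
    next
      case False thus ?thesis using small[of k] that by simp
    qed
    have "(\<Sum>k<r. (B - (s k)^2) * (t k)^2) = B * (\<Sum>k<r. (t k)^2) - P y"
      unfolding P_svd t_def by (simp add: algebra_simps sum_subtractf sum_distrib_left)
    also have "B * (\<Sum>k<r. (t k)^2) \<le> B * nrm y" using bes Bpos by (simp add: t_def)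
    finally have "(\<Sum>k<r. (B - (s k)^2) * (t k)^2) \<le> 0" using Py by simp
    moreover have "0 \<le> (\<Sum>k<r. (B - (s k)^2) * (t k)^2)" by (rule sum_nonneg) (rule nn)
    ultimately have z: "(\<Sum>k<r. (B - (s k)^2) * (t k)^2) = 0" by linarith
    have tz2: "t k = 0" if "k<r" for k
    proof (cases "k < m")
      case True thus ?thesis using tz by simp
    next
      case False
      have "(B - (s k)^2) * (t k)^2 = 0" using z sum_nonneg_eq_0_iff[OF finite_lessThan nn] that by simp
      moreover have "B - (s k)^2 > 0" using small[OF that] False by simp
      ultimately show ?thesis by simp
    qed
    have "P y = 0" unfolding P_svd using tz2 by (simp add: t_def)
    thus False using Py Bpos ynrm by simp
  qed
  have sB: "(s b)^2 = B" if b: "b < K - 1" for b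
  proof -
    have br: "b < r" using key b K_lo by linarith
    have "s (K-2) \<le> s b" using sdesc key b br K_lo by (auto simp: s_def)
    moreover have "0 < s (K-2)" using spos key by (simp add: s_def)
    ultimately have "(s (K-2))^2 \<le> (s b)^2" by (intro power_mono) auto
    moreover have "(s b)^2 \<le> B"
    proof -
      have "Q (v b) = (s b)^2" using QP[of "v b"] Pv[OF br] vsum[OF br] by simp
      moreover have "nrm (v b) = 1" using Vorth[OF br br] by (simp add: nrm_def power2_eq_square)
      ultimately show ?thesis using Qle[of "v b"] by simp
    qed
    ultimately show ?thesis using key by simp
  qed
  have v_edge: "v b i = v b j" if b: "b < K - 1" and ij: "i<n" "j<n" "w i j > 0" for b i j
  proof -
    have br: "b < r" using key b K_lo by linarith
    have "Q (v b) = B * nrm (v b)"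
      using QP[of "v b"] Pv[OF br] vsum[OF br] Vorth[OF br br] sB[OF b] by (simp add: nrm_def power2_eq_square)
    thus ?thesis using Qeq ij by blast
  qed
  have v_cl: "v b i = v b j" if b: "b < K - 1" and ij: "i<n" "j<n" "c i = c j" for b i j
  proof -
    have "(i,j) \<in> R" using cs_c[OF ij] csR ij by blast
    hence "(i,j) \<in> (E \<union> E\<inverse>)\<^sup>*" unfolding R_def .
    thus ?thesis by (rule rt_const) (use v_edge[OF b] E_w in auto)
  qed
  define Z where "Z k i = (if k = 0 then 1 / sqrt (real n) else v (k-1) i)" for k i
  have Zcl: "Z k i = Z k j" if "k<K" "i<n" "j<n" "c i = c j" for k i j
  proof (cases "k = 0")
    case True thus ?thesis by (simp add: Z_def)
  next
    case False
    hence "k - 1 < K - 1" using that by simp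
    thus ?thesis using v_cl[of "k-1" i j] that False by (simp add: Z_def)
  qed
  have vr: "k - 1 < r" if "k < K" "k \<noteq> 0" for k using key that K_lo by linarith
  have Zorth: "(\<Sum>i<n. Z k i * Z k' i) = (if k = k' then 1 else 0)" if kk: "k<K" "k'<K" for k k'
  proof (cases "k = 0")
    case True
    show ?thesis
    proof (cases "k' = 0")
      case True
      have "(\<Sum>i<n. Z k i * Z k' i) = real n * (1 / sqrt (real n) * (1 / sqrt (real n)))"
        using \<open>k = 0\<close> True by (simp add: Z_def)
      also have "\<dots> = 1" using npos by (simp add: real_sqrt_mult[symmetric])
      finally show ?thesis using \<open>k = 0\<close> True by simp
    next
      case False
      have "(\<Sum>i<n. Z k i * Z k' i) = 1 / sqrt (real n) * (\<Sum>i<n. v (k'-1) i)"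
        using \<open>k = 0\<close> False by (simp add: Z_def sum_distrib_left)
      thus ?thesis using vsum[OF vr[OF kk(2) False]] \<open>k = 0\<close> False by simp
    qed
  next
    case False
    show ?thesis
    proof (cases "k' = 0")
      case True
      have "(\<Sum>i<n. Z k i * Z k' i) = 1 / sqrt (real n) * (\<Sum>i<n. v (k-1) i)"
        using True False by (simp add: Z_def sum_distrib_left mult.commute)
      thus ?thesis using vsum[OF vr[OF kk(1) False]] True False by simp
    next
      case k'0: False
      have "(\<Sum>i<n. Z k i * Z k' i) = (\<Sum>i<n. v (k-1) i * v (k'-1) i)"
        using k'0 False by (simp add: Z_def)
      also have "\<dots> = (if k - 1 = k' - 1 then 1 else 0)" by (rule Vorth[OF vr[OF kk(1) False] vr[OF kk(2) k'0]])
      finally show ?thesis using k'0 False by auto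
    qed
  qed
  define Rm where "Rm = mat K K (\<lambda>(k,l). \<Sum>i<n. Z k i * hc n c l i)"
  have Rc: "Rm \<in> carrier_mat K K" by (simp add: Rm_def)
  have Hcar: "H \<in> carrier_mat K n" by (simp add: Hc)
  have recon: "(\<Sum>l<K. (\<Sum>i<n. Z k i * hc n c l i) * hc n c l j) = Z k j" if "k<K" "j<n" for k j
  proof -
    have cok': "\<And>i. i<n \<Longrightarrow> c i < K" using cok by blast
    show ?thesis by (rule hc_recon[OF cok' Zcl[OF that(1)] that(2)])
  qed
  have RH: "Rm * H = stacked_V K n V"
  proof (rule eq_matI)
    fix k j assume "k < dim_row (stacked_V K n V)" "j < dim_col (stacked_V K n V)"
    hence kj: "k<K" "j<n" by (simp_all add: stacked_V_def)
    have "(Rm * H) $$ (k,j) = (\<Sum>l<K. Rm $$ (k,l) * H $$ (l,j))" by (rule mult_idx[OF Rc Hcar kj])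
    also have "\<dots> = (\<Sum>l<K. (\<Sum>i<n. Z k i * hc n c l i) * hc n c l j)" using kj by (simp add: Rm_def Hc)
    also have "\<dots> = Z k j" by (rule recon[OF kj])
    also have "\<dots> = stacked_V K n V $$ (k,j)" using kj by (simp add: stacked_V_def Z_def v_def)
    finally show "(Rm * H) $$ (k,j) = stacked_V K n V $$ (k,j)" .
  qed (auto simp: Rm_def Hc stacked_V_def)
  have RRt: "Rm * transpose_mat Rm = 1\<^sub>m K"
  proof (rule eq_matI)
    fix k k' assume "k < dim_row (1\<^sub>m K)" "k' < dim_col (1\<^sub>m K)"
    hence kk: "k<K" "k'<K" by auto
    let ?X = "\<lambda>l. \<Sum>i<n. Z k i * hc n c l i"
    have "(Rm * transpose_mat Rm) $$ (k,k') = (\<Sum>l<K. Rm $$ (k,l) * transpose_mat Rm $$ (l,k'))"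
      by (rule mult_idx[OF Rc _ kk]) (simp add: Rm_def)
    also have "\<dots> = (\<Sum>l<K. ?X l * (\<Sum>j<n. Z k' j * hc n c l j))" using kk by (simp add: Rm_def)
    also have "\<dots> = (\<Sum>l<K. \<Sum>j<n. Z k' j * (?X l * hc n c l j))"
      by (intro sum.cong refl) (simp add: sum_distrib_left mult.left_commute)
    also have "\<dots> = (\<Sum>j<n. \<Sum>l<K. Z k' j * (?X l * hc n c l j))" by (rule sum.swap)
    also have "\<dots> = (\<Sum>j<n. Z k' j * Z k j)" by (intro sum.cong refl) (simp add: sum_distrib_left[symmetric] recon kk)
    also have "\<dots> = (if k' = k then 1 else 0)" by (rule Zorth[OF kk(2,1)])
    finally show "(Rm * transpose_mat Rm) $$ (k,k') = 1\<^sub>m K $$ (k,k')" using kk by auto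
  qed (auto simp: Rm_def)
  have RtR: "transpose_mat Rm * Rm = 1\<^sub>m K" by (rule mat_mult_left_right_inverse[OF Rc _ RRt]) (use Rc in auto)
  show ?thesis by (intro bexI[of _ Rm] conjI) (simp_all add: RtR RH[symmetric] Rc)
qed


end
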